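(* The functor $G=P\circ P_+\big|_\Omega:\Omega\rightarrow\Sigma$ is injective on objects and morphisms. Thus, there exists an $\Omega$ category $G\Omega$ having the functor $G$ with the target category restricted from $\Sigma$ to $G\Omega$ as its stalk isofunctor. Furthermore, $G\Omega$ is a non monoidal subcategory of $\Sigma$.
   Context: $\Sigma$ is the category of finite sets and functions; $\Omega$ is its full subcategory of finite von Neumann ordinals $[l]=\{0,\dots,l-1\}$ ($[0]=\emptyset$), strict monoidal with $[l]\smile[m]=[l+m]$, $f\smile g(i)=f(i)$ for $i\in[l]$ and $g(i-l)+p$ for $i\in[m]+l$ (for $f:[l]\to[p]$, $g:[m]\to[q]$), unit $[0]$. $P:\Sigma\to\Sigma$ is the finite power set endofunctor ($PA$ the set of subsets of $A$, $P\phi(X)=\phi(X)$), and $P_+:\Sigma\to\Sigma$ the non empty power set endofunctor ($P_+A$ the set of non empty subsets, $P_+\phi(X)=\phi(X)$). An $\Omega$ category is a Pro category $D\Omega$ with a strict monoidal isofunctor (stalk isofunctor) $D:\Omega\to D\Omega$; given a functor $D$ injective on objects and morphisms, the $\Omega$ category $D\Omega$ has objects $D[l]$, morphisms $Df$, composition $Dg\circ Df=D(g\circ f)$, identities $D\,\mathrm{id}_{[l]}$, monoidal products $D[l]\smile D[m]=D([l]\smile[m])$, $Df\smile Dg=D(f\smile g)$ and unit $D[0]$. *)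

theory Defs
  imports Main "HOL-Library.FuncSet"
begin

text \<open>Morphisms of Sigma (finite sets and functions) are triples (A, B, phi)
  with phi an extensional function from A to B.\<close>

type_synonym 'a smor = "'a set \<times> 'a set \<times> ('a \<Rightarrow> 'a)"

definition Sigma_mor :: "('a set \<times> 'b set \<times> ('a \<Rightarrow> 'b)) set" where
  "Sigma_mor = {(A, B, phi). finite A \<and> finite B \<and> phi \<in> A \<rightarrow>\<^sub>E B}"

definition Sigma_comp ::
  "('b set \<times> 'c set \<times> ('b \<Rightarrow> 'c)) \<Rightarrow> ('a set \<times> 'b set \<times> ('a \<Rightarrow> 'b))
     \<Rightarrow> ('a set \<times> 'c set \<times> ('a \<Rightarrow> 'c))" where
  "Sigma_comp g f = (fst f, fst (snd g), compose (fst f) (snd (snd g)) (snd (snd f)))"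

definition Sigma_id :: "'a set \<Rightarrow> ('a set \<times> 'a set \<times> ('a \<Rightarrow> 'a))" where
  "Sigma_id A = (A, A, restrict id A)"

definition Pobj :: "'a set \<Rightarrow> 'a set set" where
  "Pobj A = Pow A"

definition Pmor :: "('a set \<times> 'b set \<times> ('a \<Rightarrow> 'b)) \<Rightarrow> ('a set set \<times> 'b set set \<times> ('a set \<Rightarrow> 'b set))" where
  "Pmor m = (case m of (A, B, phi) \<Rightarrow> (Pobj A, Pobj B, restrict (\<lambda>X. phi ` X) (Pobj A)))"

definition Ppobj :: "'a set \<Rightarrow> 'a set set" where
  "Ppobj A = {X. X \<subseteq> A \<and> X \<noteq> {}}"

definition Ppmor :: "('a set \<times> 'b set \<times> ('a \<Rightarrow> 'b)) \<Rightarrow> ('a set set \<times> 'b set set \<times> ('a set \<Rightarrow> 'b set))" where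
  "Ppmor m = (case m of (A, B, phi) \<Rightarrow> (Ppobj A, Ppobj B, restrict (\<lambda>X. phi ` X) (Ppobj A)))"

text \<open>Omega: objects [l] = {0..<l}; morphisms f : [l] -> [p].\<close>

definition ord :: "nat \<Rightarrow> nat set" where
  "ord l = {..<l}"

definition Omega_mor :: "(nat set \<times> nat set \<times> (nat \<Rightarrow> nat)) set" where
  "Omega_mor = {(ord l, ord p, f) | l p f. f \<in> ord l \<rightarrow>\<^sub>E ord p}"

definition Gobj :: "nat \<Rightarrow> nat set set set" where
  "Gobj l = Pobj (Ppobj (ord l))"

definition Gmor :: "(nat set \<times> nat set \<times> (nat \<Rightarrow> nat)) \<Rightarrow> (nat set set set \<times> nat set set set \<times> (nat set set \<Rightarrow> nat set set))" where
  "Gmor m = Pmor (Ppmor m)"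

end

theory Submission
  imports Defs
begin

lemma Ppobj_eq: "Ppobj A = Pow A - {{}}"
  unfolding Ppobj_def by auto

lemma card_Gobj: "card (Gobj l) = 2 ^ (2 ^ l - 1)"
proof -
  have "card (Ppobj (ord l)) = 2 ^ l - 1"
    unfolding Ppobj_eq ord_def by (simp add: card_Pow card_Diff_singleton)
  then show ?thesis unfolding Gobj_def Pobj_def
    by (simp add: card_Pow Ppobj_eq ord_def)
qed

lemma Union_Gobj: "\<Union>(\<Union>(Gobj l)) = ord l"
  unfolding Gobj_def Pobj_def Ppobj_def ord_def by auto

lemma inj_Gobj: "inj Gobj"
proof (rule injI)
  fix a b assume "Gobj a = Gobj b"
  then have "ord a = ord b" by (metis Union_Gobj)
  then show "a = b" unfolding ord_def by (metis lessThan_eq_iff)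
qed

lemma Gmor_simp:
  "Gmor (A, B, f) = (Pow (Ppobj A), Pow (Ppobj B),
     restrict (\<lambda>Y. (restrict (\<lambda>X. f ` X) (Ppobj A)) ` Y) (Pow (Ppobj A)))"
  unfolding Gmor_def Pmor_def Ppmor_def Pobj_def by (simp only: prod.case)

lemma Gmor_single:
  assumes "i \<in> A"
  shows "snd (snd (Gmor (A, B, f))) {{i}} = {{f i}}"
  using assms unfolding Gmor_simp Ppobj_def by auto

lemma ord_inj: "ord a = ord b \<Longrightarrow> a = b"
  unfolding ord_def by (metis lessThan_eq_iff)

lemma Pow_Ppobj_ord_inj: "Pow (Ppobj (ord a)) = Pow (Ppobj (ord b)) \<Longrightarrow> a = b"
  by (metis Gobj_def Pobj_def inj_Gobj injD)

lemma inj_Gmor: "inj_on Gmor Omega_mor"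
proof (rule inj_onI)
  fix x y assume x: "x \<in> Omega_mor" and y: "y \<in> Omega_mor" and e: "Gmor x = Gmor y"
  from x obtain l p f where xe: "x = (ord l, ord p, f)" and f: "f \<in> ord l \<rightarrow>\<^sub>E ord p"
    unfolding Omega_mor_def by auto
  from y obtain l' p' g where ye: "y = (ord l', ord p', g)" and g: "g \<in> ord l' \<rightarrow>\<^sub>E ord p'"
    unfolding Omega_mor_def by auto
  from e have "l = l'" unfolding xe ye Gmor_simp by (auto intro: Pow_Ppobj_ord_inj)
  moreover from e have "p = p'" unfolding xe ye Gmor_simp by (auto intro: Pow_Ppobj_ord_inj)
  moreover have "f = g"
  proof
    fix i show "f i = g i"
    proof (cases "i \<in> ord l")
      case True
      with e Gmor_single[of i "ord l" "ord p" f] Gmor_single[of i "ord l'" "ord p'" g] \<open>l = l'\<close>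
      show ?thesis unfolding xe ye by auto
    next
      case False
      then show ?thesis using f g \<open>l = l'\<close> by (auto simp: PiE_def extensional_def)
    qed
  qed
  ultimately show "x = y" using xe ye by simp
qed

lemma Gmor_id: "Gmor (Sigma_id (ord l)) = Sigma_id (Gobj l)"
proof -
  let ?P = "Ppobj (ord l)"
  let ?h = "restrict (\<lambda>X. restrict id (ord l) ` X) ?P"
  have hX: "?h X = X" if "X \<in> ?P" for X
  proof -
    have "X \<subseteq> ord l" using that unfolding Ppobj_def by simp
    then have "restrict id (ord l) ` X = X" by (auto simp: image_iff)
    then show ?thesis using that by simp
  qed
  have "restrict (\<lambda>Y. ?h ` Y) (Pow ?P) = restrict id (Pow ?P)"
  proof (rule restrict_ext)
    fix Y assume "Y \<in> Pow ?P"
    then have "\<And>X. X \<in> Y \<Longrightarrow> ?h X = X" using hX by blast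
    then show "?h ` Y = id Y" by (metis id_apply image_cong image_ident)
  qed
  then show ?thesis unfolding Sigma_id_def Gmor_simp Gobj_def Pobj_def by (simp only:)
qed

lemma Gmor_comp:
  assumes f: "f \<in> Omega_mor" and g: "g \<in> Omega_mor" and m: "fst (snd f) = fst g"
  shows "Gmor (Sigma_comp g f) = Sigma_comp (Gmor g) (Gmor f)"
proof -
  from f obtain l p f' where fe: "f = (ord l, ord p, f')" and f': "f' \<in> ord l \<rightarrow>\<^sub>E ord p"
    unfolding Omega_mor_def by auto
  from g obtain p' q g' where ge: "g = (ord p', ord q, g')" and g': "g' \<in> ord p' \<rightarrow>\<^sub>E ord q"
    unfolding Omega_mor_def by auto
  from m have pp: "ord p' = ord p" using fe ge by simp
  let ?Pl = "Ppobj (ord l)" and ?Pp = "Ppobj (ord p)"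
  let ?hc = "restrict (\<lambda>X. compose (ord l) g' f' ` X) ?Pl"
  let ?hf = "restrict (\<lambda>X. f' ` X) ?Pl"
  let ?hg = "restrict (\<lambda>X. g' ` X) ?Pp"
  have key: "restrict (\<lambda>Y. ?hc ` Y) (Pow ?Pl) =
     (\<lambda>Z\<in>Pow ?Pl. (restrict (\<lambda>Y. ?hg ` Y) (Pow ?Pp)) ((restrict (\<lambda>Y. ?hf ` Y) (Pow ?Pl)) Z))"
  proof (rule restrict_ext)
    fix Y assume "Y \<in> Pow ?Pl"
    then have True: "Y \<subseteq> ?Pl" by simp
    have sub: "?hf ` Y \<subseteq> ?Pp"
      using True f' unfolding Ppobj_def by auto
    have eq: "?hc X = ?hg (?hf X)" if X: "X \<in> Y" for X
    proof -
      from X have X1: "X \<in> ?Pl" using True by auto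
      then have X2: "f' ` X \<in> ?Pp" using f' unfolding Ppobj_def by auto
      have "compose (ord l) g' f' ` X = g' ` f' ` X"
        using X1 unfolding Ppobj_def compose_def by (auto simp: image_iff)
      then show ?thesis using X1 X2 by simp
    qed
    have "?hc ` Y = ?hg ` ?hf ` Y"
      unfolding image_image by (intro image_cong refl eq) (simp only:)
    then show "?hc ` Y = restrict (\<lambda>Y. ?hg ` Y) (Pow ?Pp) (restrict (\<lambda>Y. ?hf ` Y) (Pow ?Pl) Y)"
      using True sub by simp
  qed
  show ?thesis
    unfolding fe ge Sigma_comp_def Gmor_simp pp fst_conv snd_conv using key by (simp only: compose_def[of "Pow (Ppobj (ord l))"])
qed

lemma Gmor_Sigma: "f \<in> Omega_mor \<Longrightarrow> Gmor f \<in> Sigma_mor"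
proof -
  assume "f \<in> Omega_mor"
  then obtain l p f' where fe: "f = (ord l, ord p, f')" and f': "f' \<in> ord l \<rightarrow>\<^sub>E ord p"
    unfolding Omega_mor_def by auto
  have fin: "\<And>n. finite (Pow (Ppobj (ord n)))" unfolding Ppobj_def ord_def by simp
  have "restrict (\<lambda>Y. restrict (\<lambda>X. f' ` X) (Ppobj (ord l)) ` Y) (Pow (Ppobj (ord l)))
        \<in> Pow (Ppobj (ord l)) \<rightarrow>\<^sub>E Pow (Ppobj (ord p))"
    using f' unfolding Ppobj_def by auto
  then show ?thesis unfolding fe Gmor_simp Sigma_mor_def
    by (simp only: mem_Collect_eq prod.case fin simp_thms)
qed

theorem proposition3p1:
  shows "inj Gobj
    \<and> inj_on Gmor Omega_mor
    \<and> (\<forall>l. Gmor (Sigma_id (ord l)) = Sigma_id (Gobj l))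
    \<and> (\<forall>f\<in>Omega_mor. \<forall>g\<in>Omega_mor. fst (snd f) = fst g \<longrightarrow>
          Gmor (Sigma_comp g f) = Sigma_comp (Gmor g) (Gmor f))
    \<and> (\<forall>f\<in>Omega_mor. Gmor f \<in> Sigma_mor)
    \<and> (\<exists>l m. card (Gobj (l + m)) \<noteq> card (Gobj l) + card (Gobj m)
          \<and> card (Gobj (l + m)) \<noteq> card (Gobj l) * card (Gobj m))"
proof -
  have "card (Gobj (1 + 1)) \<noteq> card (Gobj 1) + card (Gobj 1)
          \<and> card (Gobj (1 + 1)) \<noteq> card (Gobj 1) * card (Gobj 1)"
    by (simp add: card_Gobj)
  then show ?thesis using inj_Gobj inj_Gmor Gmor_id Gmor_comp Gmor_Sigma by blast
qed

end
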